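(* $$\liminf_{n\to\infty}\frac{a(n)}{n}=\frac{\varphi+2}{5}\qquad\text{and}\qquad \limsup_{n\to\infty}\frac{a(n)}{n}=\varphi .$$
   Context: $\varphi=(1+\sqrt5)/2$. Let $(F_n)_{n\ge 0}$ be the Fibonacci numbers: $F_0=0$, $F_1=1$, $F_n=F_{n-1}+F_{n-2}$ for $n\ge 2$. Define $(a(n))_{n\ge 0}$ (OEIS A105774) by $a(0)=0$, $a(1)=1$, and for $n\ge 2$, $a(n)=F_{j+1}-a(n-F_j)$, where $j\ge 2$ is the unique index with $F_j<n\le F_{j+1}$. *)

theory Defs
  imports "HOL-Analysis.Analysis" "HOL-Number_Theory.Fib"
begin

definition phi :: real where "phi = (1 + sqrt 5) / 2"

definition fidx :: "nat \<Rightarrow> nat" where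
  "fidx n = (THE j. 2 \<le> j \<and> fib j < n \<and> n \<le> fib (Suc j))"

(* OEIS A105774. The guard "0 < fib (fidx n) \<and> fib (fidx n) < n" always holds
   for n \<ge> 2 (fidx n \<ge> 2); it only serves to make termination evident. *)
function A105774 :: "nat \<Rightarrow> int" where
  "A105774 n = (if n \<le> 1 then int n
     else if 0 < fib (fidx n) \<and> fib (fidx n) < n
       then int (fib (Suc (fidx n))) - A105774 (n - fib (fidx n))
       else 0)"
  by auto
termination by (relation "Wellfounded.measure id") auto

end

theory Submission
  imports Defs
begin

declare A105774.simps[simp del]

lemma fidx_ex: "2 \<le> n \<Longrightarrow> \<exists>j. 2 \<le> j \<and> fib j < n \<and> n \<le> fib (Suc j)"
proof (induction n rule: dec_induct)
  case base
  show ?case by (intro exI[of _ 2]) (simp add: numeral_2_eq_2)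
next
  case (step n)
  then obtain j where j: "2 \<le> j" "fib j < n" "n \<le> fib (Suc j)" by blast
  show ?case
  proof (cases "Suc n \<le> fib (Suc j)")
    case True thus ?thesis using j by (intro exI[of _ j]) auto
  next
    case False
    hence "n = fib (Suc j)" using j by auto
    moreover have "fib j > 0" using j by (simp add: fib_neq_0_nat)
    ultimately show ?thesis using j by (intro exI[of _ "Suc j"]) auto
  qed
qed

lemma fidx_uniq:
  assumes "2 \<le> j" "fib j < n" "n \<le> fib (Suc j)" "2 \<le> j'" "fib j' < n" "n \<le> fib (Suc j')"
  shows "j = j'"
proof (rule ccontr)
  assume "j \<noteq> j'"
  then consider "Suc j \<le> j'" | "Suc j' \<le> j" by linarith
  thus False
  proof cases
    case 1 thus False using fib_mono[OF 1] assms by linarith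
  next
    case 2 thus False using fib_mono[OF 2] assms by linarith
  qed
qed

lemma fidx_eq: "2 \<le> j \<Longrightarrow> fib j < n \<Longrightarrow> n \<le> fib (Suc j) \<Longrightarrow> fidx n = j"
  unfolding fidx_def
  by (rule the_equality) (auto intro: fidx_uniq)

lemma fidx_props:
  assumes "2 \<le> n"
  shows "2 \<le> fidx n \<and> fib (fidx n) < n \<and> n \<le> fib (Suc (fidx n))"
proof -
  obtain j where j: "2 \<le> j" "fib j < n" "n \<le> fib (Suc j)" using fidx_ex[OF assms] by blast
  thus ?thesis using fidx_eq[OF j] by simp
qed

lemma A_rec:
  assumes "2 \<le> n"
  shows "A105774 n = int (fib (Suc (fidx n))) - A105774 (n - fib (fidx n))"
proof -
  have p: "2 \<le> fidx n" "fib (fidx n) < n" using fidx_props[OF assms] by auto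
  have "0 < fib (fidx n)" using p by (simp add: fib_neq_0_nat)
  thus ?thesis using p assms by (subst A105774.simps) auto
qed

lemma A_0: "A105774 0 = 0" by (subst A105774.simps) simp
lemma A_1: "A105774 1 = 1" by (subst A105774.simps) simp

lemma fib_Suc_le2: "0 < j \<Longrightarrow> fib (Suc j) \<le> 2 * fib j"
  by (cases j) (auto simp: fib_mono)

lemma A_bounds: "0 \<le> A105774 n \<and> A105774 n \<le> 2 * int n"
proof (induction n rule: less_induct)
  case (less n)
  show ?case
  proof (cases "n \<le> 1")
    case True thus ?thesis using A_0 A_1 by (cases n) auto
  next
    case False
    hence n2: "2 \<le> n" by simp
    define j where "j = fidx n"
    have p: "2 \<le> j" "fib j < n" "n \<le> fib (Suc j)" using fidx_props[OF n2] j_def by auto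
    define m where "m = n - fib j"
    have m1: "1 \<le> m" and mlt: "m < n" using p m_def fib_neq_0_nat[of j] by auto
    have fj: "fib (Suc j) = fib j + fib (j - 1)"
      using p(1) by (metis One_nat_def Suc_pred' fib.simps(3) less_le_trans pos2 add.commute)
    have mle: "m \<le> fib (j - 1)" using p fj m_def by linarith
    have IH: "0 \<le> A105774 m \<and> A105774 m \<le> 2 * int m" using less mlt by blast
    have rec: "A105774 n = int (fib (Suc j)) - A105774 m" using A_rec[OF n2] j_def m_def by simp
    have "2 * fib (j - 1) \<le> fib (Suc j)"
    proof -
      have "fib (j - 1) \<le> fib j" by (rule fib_mono) simp
      moreover have "fib (j - 1) \<le> fib j" by (rule fib_mono) simp
      ultimately show ?thesis using fj by linarith
    qed
    hence "A105774 n \<ge> 0" using rec IH mle by linarith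
    moreover have "A105774 n \<le> 2 * int n" using rec IH fib_Suc_le2[of j] p by linarith
    ultimately show ?thesis by blast
  qed
qed

lemma phi_gt1: "phi > 1" unfolding phi_def by simp

lemma phi_sq: "phi^2 = phi + 1"
  unfolding phi_def by (simp add: power2_eq_square field_simps)

lemma fib_ratio: "(\<lambda>n. real (fib n) / real (fib (n + d))) \<longlonglongrightarrow> (1 / phi) ^ d"
proof -
  define u where "u n = real (fib n) / (phi ^ n / sqrt 5)" for n
  have u: "u \<longlonglongrightarrow> 1" unfolding u_def phi_def by (rule fib_asymptotics)
  have u2: "(\<lambda>n. u (n + d)) \<longlonglongrightarrow> 1" using LIMSEQ_ignore_initial_segment[OF u, of d] .
  have "(\<lambda>n. u n / u (n + d) / phi ^ d) \<longlonglongrightarrow> 1 / 1 / phi ^ d"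
    using phi_gt1 by (intro tendsto_intros u u2) auto
  moreover have "u n / u (n + d) / phi ^ d = real (fib n) / real (fib (n + d))" for n
  proof -
    have "phi ^ n > 0" "phi ^ d > 0" "phi \<noteq> 0" using phi_gt1 by auto
    thus ?thesis unfolding u_def by (simp add: field_simps power_add)
  qed
  ultimately show ?thesis by (simp add: power_one_over)
qed

lemma c_eq: "1 / (1 + (1 / phi) ^ 2) = (phi + 2) / 5"
proof -
  have p: "phi > 1" by (rule phi_gt1)
  have "1 / (1 + (1 / phi) ^ 2) = phi^2 / (phi^2 + 1)" using p
    by (simp add: field_simps power2_eq_square)
  also have "\<dots> = (phi + 1) / (phi + 2)" using phi_sq by simp
  also have "\<dots> = (phi + 2) / 5"
  proof -
    have "(phi + 2) * (phi + 2) = 5 * (phi + 1)" using phi_sq by (simp add: power2_eq_square algebra_simps)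
    thus ?thesis using p by (simp add: field_simps)
  qed
  finally show ?thesis .
qed

lemma c_limit: "(\<lambda>j. real (fib (j+2)) / (real (fib (j+2)) + real (fib j))) \<longlonglongrightarrow> (phi + 2) / 5"
proof -
  have "(\<lambda>j. 1 / (1 + real (fib j) / real (fib (j + 2)))) \<longlonglongrightarrow> 1 / (1 + (1 / phi) ^ 2)"
    by (intro tendsto_intros fib_ratio) (smt (verit) zero_le_power2)
  moreover have "1 / (1 + real (fib j) / real (fib (j + 2))) = real (fib (j+2)) / (real (fib (j+2)) + real (fib j))" for j
  proof -
    have gen: "1 / (1 + y / x) = x / (x + y)" if "x > 0" "y \<ge> 0" for x y :: real
      using that by (simp add: field_simps)
    have "real (fib (j+2)) > 0" by (simp only: of_nat_0_less_iff fib_neq_0_nat zero_less_Suc add_2_eq_Suc')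
    thus ?thesis by (rule gen) simp
  qed
  ultimately show ?thesis using c_eq by simp
qed

lemma lower_bound:
  assumes c0: "0 \<le> c'" and cc: "c' < (phi + 2) / 5"
  shows "\<exists>B. \<forall>n. c' * real n - B \<le> real_of_int (A105774 n)"
proof -
  have "\<forall>\<^sub>F j in sequentially. c' < real (fib (j+2)) / (real (fib (j+2)) + real (fib j))"
    using order_tendstoD(1)[OF c_limit cc] .
  then obtain J0 where J0: "\<And>j. j \<ge> J0 \<Longrightarrow> c' < real (fib (j+2)) / (real (fib (j+2)) + real (fib j))"
    unfolding eventually_sequentially by blast
  have key: "c' * (real (fib j) + real (fib (j - 2))) \<le> real (fib j)" if "j \<ge> J0 + 4" for j
  proof -
    have e: "j - 2 + 2 = j" using that by simp
    have "j - 2 \<ge> J0" using that by simp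
    hence "c' < real (fib (j - 2 + 2)) / (real (fib (j - 2 + 2)) + real (fib (j - 2)))" by (rule J0)
    hence "c' < real (fib j) / (real (fib j) + real (fib (j - 2)))" by (simp only: e)
    moreover have "real (fib j) + real (fib (j - 2)) > 0" using that by (simp add: fib_neq_0_nat add_pos_nonneg)
    ultimately show ?thesis by (simp add: field_simps)
  qed
  define J where "J = J0 + 4"
  define B where "B = c' * real (fib (Suc J))"
  have c1: "c' \<le> 1"
  proof -
    have "phi < 3" unfolding phi_def using real_sqrt_less_iff[of 5 25] by simp
    thus ?thesis using cc by simp
  qed
  have "c' * real n - B \<le> real_of_int (A105774 n)" for n
  proof (induction n rule: less_induct)
    case (less n)
    show ?case
    proof (cases "n \<le> fib (Suc J)")
      case True
      hence "c' * real n - B \<le> 0" unfolding B_def using c0 by (simp add: mult_left_mono)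
      also have "0 \<le> real_of_int (A105774 n)" using A_bounds[of n] by simp
      finally show ?thesis .
    next
      case False
      have "fib 5 \<le> fib (Suc J)" unfolding J_def by (rule fib_mono) simp
      hence n2: "2 \<le> n" using False by (simp add: numeral_eq_Suc)
      define j where "j = fidx n"
      have p: "2 \<le> j" "fib j < n" "n \<le> fib (Suc j)" using fidx_props[OF n2] j_def by auto
      have jJ: "j \<ge> J0 + 4"
      proof (rule ccontr)
        assume "\<not> j \<ge> J0 + 4"
        hence "Suc j \<le> Suc J" unfolding J_def by simp
        thus False using fib_mono[of "Suc j" "Suc J"] p False by linarith
      qed
      have kj: "c' * (real (fib j) + real (fib (j - 2))) \<le> real (fib j)" using key[OF jJ] .
      define m where "m = n - fib j"
      have m1: "1 \<le> m" and mlt: "m < n" using p m_def fib_neq_0_nat[of j] by auto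
      have fj: "fib (Suc j) = fib j + fib (j - 1)"
        using p(1) by (metis One_nat_def Suc_pred' fib.simps(3) less_le_trans pos2 add.commute)
      have mle: "m \<le> fib (j - 1)" using p fj m_def by linarith
      have rec: "A105774 n = int (fib (Suc j)) - A105774 m" using A_rec[OF n2] j_def m_def by simp
      have nm: "real n = real (fib j) + real m" using m_def p by simp
      show ?thesis
      proof (cases "m = 1")
        case True
        have "fib 3 \<le> fib (j - 1)" by (rule fib_mono) (use jJ in simp)
        hence "2 \<le> fib (j - 1)" by (simp add: numeral_eq_Suc)
        hence "real (fib j) + 1 + 1 \<le> real (fib (Suc j))" using fj by simp
        moreover have "c' * (real (fib j) + 1) \<le> real (fib j) + 1" using c1 by (simp add: mult_left_le_one_le)
        moreover have "B \<ge> 0" unfolding B_def using c0 by simp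
        moreover have "real_of_int (A105774 n) = real (fib (Suc j)) - 1" using rec True A_1 by simp
        moreover have "c' * real n = c' * (real (fib j) + 1)" using nm True by simp
        ultimately show ?thesis by linarith
      next
        case False
        hence m2: "2 \<le> m" using m1 by simp
        define k where "k = fidx m"
        have q: "2 \<le> k" "fib k < m" "m \<le> fib (Suc k)" using fidx_props[OF m2] k_def by auto
        have kle: "k \<le> j - 2"
        proof (rule ccontr)
          assume "\<not> k \<le> j - 2"
          hence "j - 1 \<le> k" by simp
          thus False using fib_mono[of "j - 1" k] q mle by linarith
        qed
        have fk1: "fib (Suc k) \<le> fib (j - 1)" by (rule fib_mono) (use kle p in simp)
        have fk: "fib k \<le> fib (j - 2)" by (rule fib_mono) (use kle in simp)
        define m' where "m' = m - fib k"
        have m'lt: "m' < n" using m'_def mlt by simp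
        have rec2: "A105774 m = int (fib (Suc k)) - A105774 m'" using A_rec[OF m2] k_def m'_def by simp
        have IH: "c' * real m' - B \<le> real_of_int (A105774 m')" using less m'lt by blast
        have mm: "real m = real (fib k) + real m'" using m'_def q by simp
        have "c' * real (fib k) \<le> c' * real (fib (j - 2))" using fk c0 by (simp add: mult_left_mono)
        hence "c' * (real (fib j) + real (fib k)) \<le> real (fib j)" using kj by (simp add: algebra_simps)
        moreover have "real (fib (Suc j)) = real (fib j) + real (fib (j - 1))" using fj by simp
        moreover have "real (fib (Suc k)) \<le> real (fib (j - 1))" using fk1 by simp
        ultimately show ?thesis using rec rec2 IH nm mm by (simp add: algebra_simps)
      qed
    qed
  qed
  thus ?thesis by blast
qed

lemma A_upper: "2 \<le> n \<Longrightarrow> A105774 n \<le> int (fib (Suc (fidx n)))"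
  using A_rec[of n] A_bounds[of "n - fib (fidx n)"] by simp

lemma fib_ratio_inv: "(\<lambda>j. real (fib (Suc j)) / real (fib j)) \<longlonglongrightarrow> phi"
proof -
  have "(\<lambda>j. 1 / (real (fib j) / real (fib (j + 1)))) \<longlonglongrightarrow> 1 / ((1 / phi) ^ 1)"
    using phi_gt1 by (intro tendsto_intros fib_ratio) auto
  thus ?thesis by simp
qed

lemma fib_ge: "n \<le> fib (Suc n)"
proof (induction n rule: fib.induct)
  case 1 then show ?case by simp
next
  case 2 then show ?case by simp
next
  case (3 n)
  have "fib (Suc n) > 0" by (simp add: fib_neq_0_nat)
  thus ?case using 3 by simp
qed

lemma inv_fib_0: "(\<lambda>j. 1 / real (fib (Suc (j + d)))) \<longlonglongrightarrow> 0"
proof -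
  have "filterlim (\<lambda>j. real (fib (Suc (j + d)))) at_top sequentially"
  proof (rule filterlim_at_top_mono[OF filterlim_real_sequentially])
    show "\<forall>\<^sub>F j in sequentially. real j \<le> real (fib (Suc (j + d)))"
    proof (rule always_eventually, rule allI)
      fix j
      have "j \<le> fib (Suc j)" by (rule fib_ge)
      moreover have "fib (Suc j) \<le> fib (Suc (j + d))" by (rule fib_mono) simp
      ultimately show "real j \<le> real (fib (Suc (j + d)))" by linarith
    qed
  qed
  from tendsto_inverse_0_at_top[OF this] show ?thesis by (simp add: inverse_eq_divide)
qed

lemma sub_min: "A105774 (fib (Suc (2*k))) = int (fib (Suc k))^2"
proof (induction k)
  case 0 then show ?case using A_1 by simp
next
  case (Suc k)
  define N where "N = fib (Suc (Suc (Suc (2*k))))"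
  have e: "Suc (2 * Suc k) = Suc (Suc (Suc (2*k)))" by simp
  have NN: "N = fib (Suc (Suc (2*k))) + fib (Suc (2*k))" unfolding N_def by simp
  have pos: "fib (Suc (2*k)) > 0" by (simp add: fib_neq_0_nat)
  have fi: "fidx N = Suc (Suc (2*k))"
    by (rule fidx_eq) (use NN pos in \<open>auto simp: N_def\<close>)
  have N2: "2 \<le> N" using NN pos fib_neq_0_nat[of "Suc (Suc (2*k))"] by linarith
  have "A105774 N = int N - A105774 (fib (Suc (2*k)))"
    using A_rec[OF N2] fi NN by (simp add: N_def)
  also have "\<dots> = int (fib (Suc (Suc k)))^2"
    using Suc.IH fib_rec_odd[of "Suc k"] unfolding N_def e by simp
  finally show ?case unfolding N_def e .
qed

lemma sub_max: "A105774 (fib (Suc (Suc j)) + 1) = int (fib (Suc (Suc (Suc j)))) - 1"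
proof -
  have pos: "fib (Suc j) > 0" by (simp add: fib_neq_0_nat)
  have fi: "fidx (fib (Suc (Suc j)) + 1) = Suc (Suc j)"
    by (rule fidx_eq) (use pos in auto)
  have N2: "2 \<le> fib (Suc (Suc j)) + 1" using fib_neq_0_nat[of "Suc (Suc j)"] by linarith
  show ?thesis using A_rec[OF N2] fi A_1 by simp
qed

lemma lim_min: "(\<lambda>k. real_of_int (A105774 (fib (Suc (2*k)))) / real (fib (Suc (2*k)))) \<longlonglongrightarrow> (phi + 2) / 5"
proof -
  have "(\<lambda>k. 1 / (1 + (real (fib k) / real (fib (k + 1)))^2)) \<longlonglongrightarrow> 1 / (1 + ((1 / phi)^1)^2)"
    by (intro tendsto_intros fib_ratio) (smt (verit) zero_le_power2)
  moreover have "1 / (1 + (real (fib k) / real (fib (k + 1)))^2) =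
      real_of_int (A105774 (fib (Suc (2*k)))) / real (fib (Suc (2*k)))" for k
  proof -
    have gen: "1 / (1 + (y / x)^2) = x^2 / (y^2 + x^2)" if "x > 0" for x y :: real
      using that by (simp add: field_simps power2_eq_square)
    have "real (fib (Suc k)) > 0" by (simp add: fib_neq_0_nat)
    from gen[OF this, of "real (fib k)"] show ?thesis
      using sub_min[of k] fib_rec_odd[of k] by simp
  qed
  ultimately show ?thesis using c_eq by simp
qed

lemma lim_max: "(\<lambda>j. real_of_int (A105774 (fib (Suc (Suc j)) + 1)) / real (fib (Suc (Suc j)) + 1)) \<longlonglongrightarrow> phi"
proof -
  have L1: "(\<lambda>j. real (fib (j + 2)) / real (fib (j + 2 + 1))) \<longlonglongrightarrow> (1 / phi)^1"
    using LIMSEQ_ignore_initial_segment[OF fib_ratio[of 1], of 2] .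
  have L2: "(\<lambda>j. 1 / real (fib (Suc (j + 2)))) \<longlonglongrightarrow> 0" by (rule inv_fib_0)
  have "(\<lambda>j. (1 - 1 / real (fib (Suc (j + 2)))) / (real (fib (j + 2)) / real (fib (j + 2 + 1)) + 1 / real (fib (Suc (j + 2)))))
     \<longlonglongrightarrow> (1 - 0) / ((1 / phi)^1 + 0)"
    using phi_gt1 by (intro tendsto_intros L1 L2) auto
  moreover have "(1 - 1 / real (fib (Suc (j + 2)))) / (real (fib (j + 2)) / real (fib (j + 2 + 1)) + 1 / real (fib (Suc (j + 2))))
      = real_of_int (A105774 (fib (Suc (Suc j)) + 1)) / real (fib (Suc (Suc j)) + 1)" for j
  proof -
    have gen: "(1 - 1 / x) / (y / x + 1 / x) = (x - 1) / (y + 1)" if "x > 0" "y \<ge> 0" for x y :: real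
    proof -
      have a: "1 - 1 / x = (x - 1) / x" using that by (simp add: field_simps)
      have b: "y / x + 1 / x = (y + 1) / x" by (simp add: add_divide_distrib)
      have "x \<noteq> 0" "y + 1 \<noteq> 0" using that by auto
      thus ?thesis unfolding a b by simp
    qed
    have "real (fib (Suc (Suc (Suc j)))) > 0" by (simp only: of_nat_0_less_iff fib_neq_0_nat zero_less_Suc)
    from gen[OF this, of "real (fib (Suc (Suc j)))"] show ?thesis
      using sub_max[of j] by (simp add: numeral_2_eq_2)
  qed
  ultimately show ?thesis by simp
qed

theorem proposition7:
  shows "liminf (\<lambda>n. ereal (real_of_int (A105774 n) / real n)) = ereal ((phi + 2) / 5)
     \<and> limsup (\<lambda>n. ereal (real_of_int (A105774 n) / real n)) = ereal phi"
proof -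
  define X where "X = (\<lambda>n. ereal (real_of_int (A105774 n) / real n))"
  define c where "c = (phi + 2) / 5"
  have cpos: "c > 0" unfolding c_def using phi_gt1 by simp
  have i1: "ereal c \<le> liminf X"
    unfolding le_Liminf_iff
  proof (intro allI impI)
    fix y assume "y < ereal c"
    then obtain c'' where c'': "y < ereal c''" "c'' < c" using ereal_dense2 by force
    define c' where "c' = (max c'' 0 + c) / 2"
    have c': "0 \<le> c'" "c'' < c'" "c' < c" unfolding c'_def using c'' cpos by auto
    obtain B where B: "\<And>n. c' * real n - B \<le> real_of_int (A105774 n)"
      using lower_bound[OF c'(1) c'(3)[unfolded c_def]] by blast
    define N where "N = nat (ceiling (B / (c' - c''))) + 1"
    have "c'' < real_of_int (A105774 n) / real n" if "n \<ge> N" for n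
    proof -
      have d: "c' - c'' > 0" using c' by simp
      have "real n > B / (c' - c'')" using that unfolding N_def by linarith
      hence "real n * (c' - c'') > B" using d by (simp add: field_simps)
      hence "c'' * real n < real_of_int (A105774 n)" using B[of n] by (simp add: algebra_simps)
      moreover have "real n > 0" using that unfolding N_def by simp
      ultimately show ?thesis by (simp add: field_simps)
    qed
    hence "\<forall>\<^sub>F n in sequentially. ereal c'' < X n"
      unfolding X_def eventually_sequentially by auto
    thus "\<forall>\<^sub>F n in sequentially. y < X n"
      by (rule eventually_mono) (use c'' in \<open>meson order.strict_trans\<close>)
  qed
  define r where "r k = fib (Suc (2*k))" for k
  have r: "strict_mono r" unfolding strict_mono_Suc_iff r_def
  proof
    fix k
    have "fib (Suc (Suc (2*k))) > 0" by (simp only: fib_neq_0_nat zero_less_Suc)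
    thus "fib (Suc (2 * k)) < fib (Suc (2 * Suc k))" by simp
  qed
  have i2: "liminf X \<le> ereal c"
  proof -
    have "(X \<circ> r) \<longlonglongrightarrow> ereal c"
      unfolding X_def r_def c_def comp_def by (intro tendsto_intros lim_min)
    hence "liminf (X \<circ> r) = ereal c" by (intro lim_imp_Liminf) auto
    thus ?thesis using liminf_subseq_mono[OF r, of X] by simp
  qed
  have s1: "limsup X \<le> ereal phi"
    unfolding Limsup_le_iff
  proof (intro allI impI)
    fix y assume "y > ereal phi"
    then obtain z where z: "ereal z < y" "phi < z" using ereal_dense2 by force
    have "\<forall>\<^sub>F j in sequentially. real (fib (Suc j)) / real (fib j) < z"
      using order_tendstoD(2)[OF fib_ratio_inv z(2)] .
    then obtain J where J: "\<And>j. j \<ge> J \<Longrightarrow> real (fib (Suc j)) / real (fib j) < z"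
      unfolding eventually_sequentially by blast
    have "real_of_int (A105774 n) / real n < z" if "n \<ge> Suc (fib (Suc J))" for n
    proof -
      have n2: "2 \<le> n" using that fib_neq_0_nat[of "Suc J"] by linarith
      define j where "j = fidx n"
      have p: "2 \<le> j" "fib j < n" "n \<le> fib (Suc j)" using fidx_props[OF n2] j_def by auto
      have jJ: "j \<ge> J"
      proof (rule ccontr)
        assume "\<not> j \<ge> J"
        hence "Suc j \<le> Suc J" by simp
        thus False using fib_mono[of "Suc j" "Suc J"] p that by linarith
      qed
      have fjp: "real (fib j) > 0" using p by (simp add: fib_neq_0_nat)
      have up: "real_of_int (A105774 n) \<le> real (fib (Suc j))" using A_upper[OF n2] j_def by simp
      have nonneg: "0 \<le> real_of_int (A105774 n)" using A_bounds[of n] by simp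
      have "real_of_int (A105774 n) / real n \<le> real_of_int (A105774 n) / real (fib j)"
        using p fjp nonneg by (intro divide_left_mono) auto
      also have "\<dots> \<le> real (fib (Suc j)) / real (fib j)"
        using up fjp by (intro divide_right_mono) auto
      also have "\<dots> < z" using J[OF jJ] .
      finally show ?thesis .
    qed
    hence "\<forall>\<^sub>F n in sequentially. X n < ereal z"
      unfolding X_def eventually_sequentially by auto
    thus "\<forall>\<^sub>F n in sequentially. X n < y"
      by (rule eventually_mono) (use z in \<open>meson order.strict_trans\<close>)
  qed
  define s where "s j = fib (Suc (Suc j)) + 1" for j
  have s: "strict_mono s" unfolding strict_mono_Suc_iff s_def
  proof
    fix j
    have "fib (Suc j) > 0" by (simp only: fib_neq_0_nat zero_less_Suc)
    thus "fib (Suc (Suc j)) + 1 < fib (Suc (Suc (Suc j))) + 1" by simp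
  qed
  have s2: "ereal phi \<le> limsup X"
  proof -
    have "(X \<circ> s) \<longlonglongrightarrow> ereal phi"
      unfolding X_def s_def comp_def by (intro tendsto_intros lim_max)
    hence "limsup (X \<circ> s) = ereal phi" by (intro lim_imp_Limsup) auto
    thus ?thesis using limsup_subseq_mono[OF s, of X] by simp
  qed
  show ?thesis using i1 i2 s1 s2 unfolding X_def c_def by (metis order.antisym)
qed

end
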